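(* Let $D$ be an integral domain and let $\Theta$ be a Jaffard family of $D$. Then there is an exact sequence $$0\longrightarrow\mathrm{Pic}(D,\Theta)\longrightarrow\mathrm{Pic}(D)\longrightarrow\bigoplus_{T\in\Theta}\mathrm{Pic}(T)\longrightarrow 0,$$ where the first map is the inclusion and the second is $[I]\mapsto([IT])_{T\in\Theta}$.
   Context: $K$ is the quotient field of $D$; for a domain $A$, $\mathrm{Pic}(A)$ is the group of invertible fractional ideals modulo principal ones. $\mathrm{Pic}(D,\Theta)=\{[I]\in\mathrm{Pic}(D)\mid IT\text{ principal for all }T\in\Theta\}$. An overring is a ring between $D$ and $K$, flat if flat as a $D$-module. A pre-Jaffard family of $D$ is a set $\Theta$ of overrings with: $\Theta=\{K\}$ or $K\notin\Theta$; all members flat; complete (every ideal $I$ of $D$ equals $\bigcap_{T\in\Theta}IT$); independent ($TT'=K$ for distinct members); compact in the Zariski topology on overrings (subbasic opens $\{T\mid x_1,\dots,x_n\in T\}$). A Jaffard family is a pre-Jaffard family that is locally finite (each nonzero $x\in D$ is a nonunit in only finitely many members). *)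

theory Defs
  imports "HOL-Algebra.Product_Groups" "HOL-Algebra.Coset" "HOL-Analysis.Abstract_Topology"
begin

text \<open>Ambient field K is a type 'k :: field; D is a subring of K whose quotient field is K.\<close>

definition is_subring :: "'k::field set \<Rightarrow> bool" where
  "is_subring R \<longleftrightarrow> 0 \<in> R \<and> 1 \<in> R \<and> (\<forall>x\<in>R. \<forall>y\<in>R. x + y \<in> R \<and> x - y \<in> R \<and> x * y \<in> R)"

definition domain_with_qf :: "'k::field set \<Rightarrow> bool" where
  "domain_with_qf D \<longleftrightarrow> is_subring D \<and> (\<forall>z. \<exists>a\<in>D. \<exists>b\<in>D. b \<noteq> 0 \<and> z = a / b)"

definition ideal_prod :: "'k::field set \<Rightarrow> 'k set \<Rightarrow> 'k set" where
  "ideal_prod A B = {(\<Sum>i<(n::nat). f i * g i) | n f g. \<forall>i<n. f i \<in> A \<and> g i \<in> B}"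

definition submodule :: "'k::field set \<Rightarrow> 'k set \<Rightarrow> bool" where
  "submodule R M \<longleftrightarrow> 0 \<in> M \<and> (\<forall>x\<in>M. \<forall>y\<in>M. x + y \<in> M) \<and> (\<forall>r\<in>R. \<forall>x\<in>M. r * x \<in> M)"

definition ring_ideal :: "'k::field set \<Rightarrow> 'k set \<Rightarrow> bool" where
  "ring_ideal R I \<longleftrightarrow> submodule R I \<and> I \<subseteq> R"

definition frac_ideal :: "'k::field set \<Rightarrow> 'k set \<Rightarrow> bool" where
  "frac_ideal R I \<longleftrightarrow> submodule R I \<and> (\<exists>d\<in>R. d \<noteq> 0 \<and> (\<lambda>x. d * x) ` I \<subseteq> R)"

definition invertible_frac :: "'k::field set \<Rightarrow> 'k set \<Rightarrow> bool" where
  "invertible_frac R I \<longleftrightarrow> frac_ideal R I \<and> (\<exists>J. frac_ideal R J \<and> ideal_prod I J = R)"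

definition principal :: "'k::field set \<Rightarrow> 'k set \<Rightarrow> bool" where
  "principal R I \<longleftrightarrow> (\<exists>x. I = (\<lambda>r. x * r) ` R)"

definition ideal_group :: "'k::field set \<Rightarrow> 'k set monoid" where
  "ideal_group R = \<lparr>carrier = {I. invertible_frac R I}, mult = ideal_prod, one = R\<rparr>"

definition princ :: "'k::field set \<Rightarrow> 'k set set" where
  "princ R = {I. invertible_frac R I \<and> principal R I}"

definition Pic :: "'k::field set \<Rightarrow> 'k set set monoid" where
  "Pic R = ideal_group R Mod princ R"

definition pic_class :: "'k::field set \<Rightarrow> 'k set \<Rightarrow> 'k set set" where
  "pic_class R I = princ R #>\<^bsub>ideal_group R\<^esub> I"

definition overring :: "'k::field set \<Rightarrow> 'k set \<Rightarrow> bool" where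
  "overring D T \<longleftrightarrow> is_subring T \<and> D \<subseteq> T"

text \<open>Flatness of T as a D-module, via the equational criterion of flatness.\<close>
definition flat_over :: "'k::field set \<Rightarrow> 'k set \<Rightarrow> bool" where
  "flat_over D T \<longleftrightarrow>
     (\<forall>n a x. (\<forall>i<n. a i \<in> D \<and> x i \<in> T) \<and> (\<Sum>i<(n::nat). a i * x i) = 0 \<longrightarrow>
        (\<exists>(m::nat) b y. (\<forall>j<m. y j \<in> T) \<and> (\<forall>i<n. \<forall>j<m. b i j \<in> D) \<and>
             (\<forall>i<n. x i = (\<Sum>j<m. b i j * y j)) \<and> (\<forall>j<m. (\<Sum>i<n. a i * b i j) = 0)))"

definition zariski :: "'k::field set \<Rightarrow> 'k set topology" where
  "zariski D = topology_generated_by {{T. overring D T \<and> set xs \<subseteq> T} | xs. True}"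

definition pre_jaffard :: "'k::field set \<Rightarrow> 'k set set \<Rightarrow> bool" where
  "pre_jaffard D \<Theta> \<longleftrightarrow>
     (\<Theta> = {UNIV} \<or> UNIV \<notin> \<Theta>) \<and>
     (\<forall>T\<in>\<Theta>. overring D T \<and> flat_over D T) \<and>
     (\<forall>I. ring_ideal D I \<longrightarrow> I = (\<Inter>T\<in>\<Theta>. ideal_prod I T)) \<and>
     (\<forall>T\<in>\<Theta>. \<forall>T'\<in>\<Theta>. T \<noteq> T' \<longrightarrow> ideal_prod T T' = UNIV) \<and>
     compactin (zariski D) \<Theta>"

definition jaffard :: "'k::field set \<Rightarrow> 'k set set \<Rightarrow> bool" where
  "jaffard D \<Theta> \<longleftrightarrow> pre_jaffard D \<Theta> \<and>
     (\<forall>x\<in>D. x \<noteq> 0 \<longrightarrow> finite {T\<in>\<Theta>. \<not> (\<exists>y\<in>T. x * y = 1)})"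

definition Pic_rel :: "'k::field set \<Rightarrow> 'k set set \<Rightarrow> 'k set set set" where
  "Pic_rel D \<Theta> = {c \<in> carrier (Pic D). \<exists>I\<in>c. \<forall>T\<in>\<Theta>. principal T (ideal_prod I T)}"

definition pic_map :: "'k::field set \<Rightarrow> 'k set set \<Rightarrow> 'k set set \<Rightarrow> ('k set \<Rightarrow> 'k set set)" where
  "pic_map D \<Theta> c = (\<lambda>T\<in>\<Theta>. pic_class T (ideal_prod (SOME I. I \<in> c) T))"

end

theory Submission
  imports Defs
begin


lemma sum_split_nat: "(\<Sum>i<n+m. h i) = (\<Sum>i<n. h i) + (\<Sum>i<(m::nat). (h (i+n)::'a::comm_monoid_add))"
  by (induction m) (auto simp: add_ac)

lemma ipE: "x \<in> ideal_prod (A::'k::field set) B \<Longrightarrow> \<exists>n f g. x = (\<Sum>i<(n::nat). f i * g i) \<and> (\<forall>i<n. f i \<in> A \<and> g i \<in> B)"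
  unfolding ideal_prod_def by blast

lemma ipI: "x = (\<Sum>i<(n::nat). f i * g i) \<Longrightarrow> (\<forall>i<n. f i \<in> A \<and> g i \<in> B) \<Longrightarrow> x \<in> ideal_prod (A::'k::field set) B"
  unfolding ideal_prod_def by blast

lemma ip_mult: "a \<in> A \<Longrightarrow> b \<in> B \<Longrightarrow> a*b \<in> ideal_prod (A::'k::field set) B"
  by (rule ipI[where n=1 and f="\<lambda>_. a" and g="\<lambda>_. b"]) auto

lemma ip_zero: "0 \<in> ideal_prod (A::'k::field set) B"
  by (rule ipI[where n=0]) auto

lemma ip_add:
  assumes "x \<in> ideal_prod (A::'k::field set) B" "y \<in> ideal_prod A B"
  shows "x + y \<in> ideal_prod A B"
proof -
  obtain n :: nat and f g where x: "x = (\<Sum>i<n. f i * g i)" "\<forall>i<n. f i \<in> A \<and> g i \<in> B"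
    using ipE[OF assms(1)] by blast
  obtain m :: nat and f' g' where y: "y = (\<Sum>i<m. f' i * g' i)" "\<forall>i<m. f' i \<in> A \<and> g' i \<in> B"
    using ipE[OF assms(2)] by blast
  define F where "F i = (if i < n then f i else f' (i - n))" for i
  define G where "G i = (if i < n then g i else g' (i - n))" for i
  have e1: "(\<Sum>i<n+m. F i * G i) = (\<Sum>i<n. F i * G i) + (\<Sum>i<m. F (i+n) * G (i+n))"
    by (rule sum_split_nat)
  have e2: "(\<Sum>i<n. F i * G i) = x" using x by (simp add: F_def G_def)
  have e3: "(\<Sum>i<m. F (i+n) * G (i+n)) = y" using y by (simp add: F_def G_def)
  have "x + y = (\<Sum>i<n+m. F i * G i)" using e1 e2 e3 by simp
  moreover have "\<forall>i<n+m. F i \<in> A \<and> G i \<in> B" using x y by (auto simp: F_def G_def)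
  ultimately show ?thesis by (rule ipI)
qed

lemma ip_induct:
  assumes "x \<in> ideal_prod (A::'k::field set) B" "0 \<in> M" "\<And>x y. x \<in> M \<Longrightarrow> y \<in> M \<Longrightarrow> x + y \<in> M"
    "\<And>a b. a \<in> A \<Longrightarrow> b \<in> B \<Longrightarrow> a * b \<in> M"
  shows "x \<in> M"
proof -
  obtain n :: nat and f g where x: "x = (\<Sum>i<n. f i * g i)" "\<forall>i<n. f i \<in> A \<and> g i \<in> B"
    using ipE[OF assms(1)] by blast
  have "\<forall>i<n. f i \<in> A \<and> g i \<in> B \<Longrightarrow> (\<Sum>i<n. f i * g i) \<in> M" for n
    by (induction n) (auto simp: assms(2-4))
  with x show ?thesis by blast
qed

lemma ip_sum:
  "(\<And>i. i < n \<Longrightarrow> h i \<in> ideal_prod (A::'k::field set) B) \<Longrightarrow> (\<Sum>i<(n::nat). h i) \<in> ideal_prod A B"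
  by (induction n) (auto simp: ip_zero ip_add)

lemma ip_sum_set:
  "finite S \<Longrightarrow> (\<And>i. i \<in> S \<Longrightarrow> h i \<in> ideal_prod (A::'k::field set) B) \<Longrightarrow> (\<Sum>i\<in>S. h i) \<in> ideal_prod A B"
  by (induction S rule: finite_induct) (auto simp: ip_zero ip_add)


lemma ip_sub:
  assumes "0 \<in> M" "\<And>x y. x \<in> M \<Longrightarrow> y \<in> M \<Longrightarrow> x + y \<in> M"
    "\<And>a b. a \<in> A \<Longrightarrow> b \<in> B \<Longrightarrow> a * b \<in> M"
  shows "ideal_prod (A::'k::field set) B \<subseteq> M"
  using ip_induct assms by blast

lemma ip_comm: "ideal_prod (A::'k::field set) B = ideal_prod B A"
proof -
  have *: "ideal_prod (A::'k::field set) B \<subseteq> ideal_prod B A" for A B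
  proof (rule ip_sub)
    fix a b assume "a \<in> A" "b \<in> B"
    then have "b * a \<in> ideal_prod B A" by (rule ip_mult[rotated])
    thus "a * b \<in> ideal_prod B A" by (simp add: mult.commute)
  qed (auto intro: ip_zero ip_add)
  show ?thesis using *[of A B] *[of B A] by blast
qed

lemma ip_mono: "A \<subseteq> A' \<Longrightarrow> B \<subseteq> B' \<Longrightarrow> ideal_prod (A::'k::field set) B \<subseteq> ideal_prod A' B'"
  by (auto elim!: ip_induct intro: ip_zero ip_add ip_mult)

lemma ip_scal:
  assumes "x \<in> ideal_prod (A::'k::field set) B" "\<And>a. a \<in> A \<Longrightarrow> r*a \<in> A'"
  shows "r*x \<in> ideal_prod A' B"
proof -
  have "x \<in> {x. r*x \<in> ideal_prod A' B}"
    by (rule ip_induct[OF assms(1)]) (auto simp: ip_zero distrib_left intro!: ip_add simp flip: mult.assoc intro: ip_mult assms(2))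
  thus ?thesis by simp
qed

lemma ip_scal2:
  assumes "x \<in> ideal_prod (A::'k::field set) B" "\<And>b. b \<in> B \<Longrightarrow> r*b \<in> B'"
  shows "r*x \<in> ideal_prod A B'"
  using ip_scal[of x B A r B'] assms ip_comm by metis

lemma ip_assoc1: "ideal_prod (ideal_prod (A::'k::field set) B) C \<subseteq> ideal_prod A (ideal_prod B C)"
proof (rule ip_sub)
  fix y c assume y: "y \<in> ideal_prod A B" and c: "c \<in> C"
  have "y \<in> {y. y * c \<in> ideal_prod A (ideal_prod B C)}"
    by (rule ip_induct[OF y]) (auto simp: ip_zero distrib_right mult.assoc intro!: ip_add ip_mult c)
  thus "y * c \<in> ideal_prod A (ideal_prod B C)" by simp
qed (auto intro: ip_zero ip_add)

lemma ip_assoc: "ideal_prod (ideal_prod (A::'k::field set) B) C = ideal_prod A (ideal_prod B C)"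
proof
  show "ideal_prod (ideal_prod A B) C \<subseteq> ideal_prod A (ideal_prod B C)" by (rule ip_assoc1)
  have "ideal_prod A (ideal_prod B C) = ideal_prod (ideal_prod C B) A" by (simp add: ip_comm)
  also have "\<dots> \<subseteq> ideal_prod C (ideal_prod B A)" by (rule ip_assoc1)
  also have "\<dots> = ideal_prod (ideal_prod A B) C" by (simp add: ip_comm)
  finally show "ideal_prod A (ideal_prod B C) \<subseteq> ideal_prod (ideal_prod A B) C" .
qed

lemma ip_mult_ext:
  assumes x: "x \<in> ideal_prod (A::'k::field set) T" and y: "y \<in> ideal_prod B T"
    and T: "\<And>s t. s \<in> T \<Longrightarrow> t \<in> T \<Longrightarrow> s * t \<in> T"
  shows "x * y \<in> ideal_prod (ideal_prod A B) T"
proof -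
  have "x \<in> {x. x * y \<in> ideal_prod (ideal_prod A B) T}"
  proof (rule ip_induct[OF x])
    fix a t assume a: "a \<in> A" and t: "t \<in> T"
    have "y \<in> {y. a * t * y \<in> ideal_prod (ideal_prod A B) T}"
    proof (rule ip_induct[OF y])
      fix b t' assume b: "b \<in> B" and t': "t' \<in> T"
      have eq: "a * t * (b * t') = (a * b) * (t * t')" by (simp add: ac_simps)
      moreover have "(a * b) * (t * t') \<in> ideal_prod (ideal_prod A B) T"
        by (rule ip_mult[OF ip_mult[OF a b] T[OF t t']])
      ultimately show "b * t' \<in> {y. a * t * y \<in> ideal_prod (ideal_prod A B) T}" by (simp only: mem_Collect_eq eq)
    qed (auto simp: ip_zero distrib_left intro: ip_add)
    thus "a * t \<in> {x. x * y \<in> ideal_prod (ideal_prod A B) T}" by simp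
  qed (auto simp: ip_zero distrib_right intro: ip_add)
  thus ?thesis by simp
qed

lemma subring_sum: "is_subring R \<Longrightarrow> (\<And>i. i \<in> S \<Longrightarrow> f i \<in> R) \<Longrightarrow> sum f S \<in> R"
  unfolding is_subring_def
  by (induction S rule: infinite_finite_induct) auto

lemma subring_uminus: "is_subring R \<Longrightarrow> x \<in> R \<Longrightarrow> -x \<in> R"
  unfolding is_subring_def by (metis diff_0)

lemma subring_mult: "is_subring R \<Longrightarrow> x \<in> R \<Longrightarrow> y \<in> R \<Longrightarrow> x * y \<in> R"
  unfolding is_subring_def by blast

lemma subring_add: "is_subring R \<Longrightarrow> x \<in> R \<Longrightarrow> y \<in> R \<Longrightarrow> x + y \<in> R"
  unfolding is_subring_def by blast

lemma ip_submodule_right: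
  assumes "is_subring R" "submodule R A" shows "ideal_prod A R = A"
proof
  show "ideal_prod A R \<subseteq> A"
    using assms by (intro ip_sub) (auto simp: submodule_def, metis mult.commute)
  show "A \<subseteq> ideal_prod A R"
  proof
    fix a assume "a \<in> A"
    then have "a * 1 \<in> ideal_prod A R" using assms by (intro ip_mult) (auto simp: is_subring_def)
    thus "a \<in> ideal_prod A R" by simp
  qed
qed

lemma ip_submodule_left:
  assumes "is_subring R" "submodule R A" shows "ideal_prod R A = A"
  using ip_submodule_right[OF assms] ip_comm by metis

lemma submodule_ip:
  assumes "submodule R A" shows "submodule R (ideal_prod A B)"
  using assms unfolding submodule_def
  by (auto intro: ip_zero ip_add ip_scal)

lemma submodule_ip2:
  assumes "submodule R B" shows "submodule R (ideal_prod A B)"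
  using submodule_ip[OF assms] ip_comm by metis

lemma subring_ip_self: "is_subring R \<Longrightarrow> ideal_prod R R = R"
  by (rule ip_submodule_right) (auto simp: submodule_def is_subring_def)



lemma dqf_subring: "domain_with_qf R \<Longrightarrow> is_subring R"
  by (simp add: domain_with_qf_def)

lemma subring_01: "is_subring R \<Longrightarrow> 0 \<in> R \<and> 1 \<in> R"
  by (simp add: is_subring_def)

lemma inv_frac_submodule: "invertible_frac R I \<Longrightarrow> submodule R I"
  by (simp add: invertible_frac_def frac_ideal_def)

lemma frac_submodule: "frac_ideal R I \<Longrightarrow> submodule R I"
  by (simp add: frac_ideal_def)

lemma subring_submodule: "is_subring R \<Longrightarrow> submodule R R"
  by (simp add: submodule_def is_subring_def)

lemma inv_frac_mult:
  assumes R: "is_subring R" and I: "invertible_frac R I" and J: "invertible_frac R J"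
  shows "invertible_frac R (ideal_prod I J)"
proof -
  obtain d1 where d1: "d1 \<in> R" "d1 \<noteq> 0" "(\<lambda>x. d1 * x) ` I \<subseteq> R" and sI: "submodule R I"
    using I by (auto simp: invertible_frac_def frac_ideal_def)
  obtain d2 where d2: "d2 \<in> R" "d2 \<noteq> 0" "(\<lambda>x. d2 * x) ` J \<subseteq> R" and sJ: "submodule R J"
    using J by (auto simp: invertible_frac_def frac_ideal_def)
  obtain I' where I': "frac_ideal R I'" "ideal_prod I I' = R" using I by (auto simp: invertible_frac_def)
  obtain J' where J': "frac_ideal R J'" "ideal_prod J J' = R" using J by (auto simp: invertible_frac_def)
  have "ideal_prod I J \<subseteq> {x. d1 * d2 * x \<in> R}"
  proof (rule ip_sub)
    show "0 \<in> {x. d1 * d2 * x \<in> R}" using R by (simp add: subring_01)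
    show "x + y \<in> {x. d1 * d2 * x \<in> R}" if "x \<in> {x. d1 * d2 * x \<in> R}" "y \<in> {x. d1 * d2 * x \<in> R}" for x y
      using that R by (simp add: distrib_left subring_add)
    show "a * b \<in> {x. d1 * d2 * x \<in> R}" if "a \<in> I" "b \<in> J" for a b
    proof -
      have "d1 * a \<in> R" "d2 * b \<in> R" using that d1 d2 by auto
      hence "(d1 * a) * (d2 * b) \<in> R" using R by (simp add: subring_mult)
      thus ?thesis by (simp add: ac_simps)
    qed
  qed
  hence fr: "frac_ideal R (ideal_prod I J)"
    unfolding frac_ideal_def using submodule_ip[OF sI] d1 d2 R
    by (intro conjI bexI[of _ "d1*d2"]) (auto simp: subring_mult)
  have sI': "submodule R I'" using I' by (simp add: frac_submodule)
  have fr2: "frac_ideal R (ideal_prod I' J')"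
    unfolding frac_ideal_def
  proof (intro conjI)
    show "submodule R (ideal_prod I' J')" using submodule_ip[OF sI'] .
    obtain e1 where e1: "e1 \<in> R" "e1 \<noteq> 0" "(\<lambda>x. e1 * x) ` I' \<subseteq> R" using I' by (auto simp: frac_ideal_def)
    obtain e2 where e2: "e2 \<in> R" "e2 \<noteq> 0" "(\<lambda>x. e2 * x) ` J' \<subseteq> R" using J' by (auto simp: frac_ideal_def)
    have "ideal_prod I' J' \<subseteq> {x. e1 * e2 * x \<in> R}"
    proof (rule ip_sub)
      show "0 \<in> {x. e1 * e2 * x \<in> R}" using R by (simp add: subring_01)
      show "x + y \<in> {x. e1 * e2 * x \<in> R}" if "x \<in> {x. e1 * e2 * x \<in> R}" "y \<in> {x. e1 * e2 * x \<in> R}" for x y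
        using that R by (simp add: distrib_left subring_add)
      show "a * b \<in> {x. e1 * e2 * x \<in> R}" if "a \<in> I'" "b \<in> J'" for a b
      proof -
        have "e1 * a \<in> R" "e2 * b \<in> R" using that e1 e2 by auto
        hence "(e1 * a) * (e2 * b) \<in> R" using R by (simp add: subring_mult)
        thus ?thesis by (simp add: ac_simps)
      qed
    qed
    thus "\<exists>d\<in>R. d \<noteq> 0 \<and> (\<lambda>x. d * x) ` ideal_prod I' J' \<subseteq> R"
      using e1 e2 R by (intro bexI[of _ "e1*e2"]) (auto simp: subring_mult)
  qed
  have "ideal_prod (ideal_prod I J) (ideal_prod I' J') = ideal_prod I (ideal_prod J (ideal_prod I' J'))"
    by (simp add: ip_assoc)
  also have "ideal_prod J (ideal_prod I' J') = ideal_prod J (ideal_prod J' I')" by (simp add: ip_comm)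
  also have "\<dots> = ideal_prod (ideal_prod J J') I'" by (simp add: ip_assoc)
  also have "\<dots> = I'" using J'(2) ip_submodule_left[OF R sI'] by simp
  finally have "ideal_prod (ideal_prod I J) (ideal_prod I' J') = R" using I'(2) by simp
  thus ?thesis using fr fr2 unfolding invertible_frac_def by blast
qed

lemma inv_frac_one: "is_subring R \<Longrightarrow> invertible_frac R R"
  unfolding invertible_frac_def frac_ideal_def
  by (auto simp: subring_submodule subring_ip_self subring_01 intro!: bexI[of _ 1] exI[of _ R])

lemma inv_frac_inv:
  assumes "invertible_frac R I"
  shows "\<exists>J. invertible_frac R J \<and> ideal_prod J I = R"
proof -
  obtain J where J: "frac_ideal R J" "ideal_prod I J = R" using assms by (auto simp: invertible_frac_def)
  have "invertible_frac R J" using J assms unfolding invertible_frac_def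
    by (metis ip_comm)
  thus ?thesis using J ip_comm by metis
qed

lemma comm_group_ideal_group:
  assumes R: "is_subring R" shows "comm_group (ideal_group R)"
proof (rule comm_groupI)
  show "x \<otimes>\<^bsub>ideal_group R\<^esub> y \<in> carrier (ideal_group R)"
    if "x \<in> carrier (ideal_group R)" "y \<in> carrier (ideal_group R)" for x y
    using that inv_frac_mult[OF R] by (simp add: ideal_group_def)
  show "\<one>\<^bsub>ideal_group R\<^esub> \<in> carrier (ideal_group R)"
    using inv_frac_one[OF R] by (simp add: ideal_group_def)
  show "x \<otimes>\<^bsub>ideal_group R\<^esub> y \<otimes>\<^bsub>ideal_group R\<^esub> z = x \<otimes>\<^bsub>ideal_group R\<^esub> (y \<otimes>\<^bsub>ideal_group R\<^esub> z)" for x y z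
    by (simp add: ideal_group_def ip_assoc)
  show "x \<otimes>\<^bsub>ideal_group R\<^esub> y = y \<otimes>\<^bsub>ideal_group R\<^esub> x" for x y
    by (simp add: ideal_group_def ip_comm)
  show "\<one>\<^bsub>ideal_group R\<^esub> \<otimes>\<^bsub>ideal_group R\<^esub> x = x" if "x \<in> carrier (ideal_group R)" for x
    using that by (simp add: ideal_group_def ip_submodule_left[OF R inv_frac_submodule])
  show "\<exists>y\<in>carrier (ideal_group R). y \<otimes>\<^bsub>ideal_group R\<^esub> x = \<one>\<^bsub>ideal_group R\<^esub>"
    if "x \<in> carrier (ideal_group R)" for x
    using that inv_frac_inv by (simp add: ideal_group_def)
qed

lemma group_ideal_group: "is_subring R \<Longrightarrow> group (ideal_group R)"
  using comm_group_ideal_group comm_group.axioms(2) by blast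

definition pr :: "'k::field \<Rightarrow> 'k set \<Rightarrow> 'k set" where
  "pr x R = (\<lambda>r. x * r) ` R"

lemma principal_pr: "principal R I \<longleftrightarrow> (\<exists>x. I = pr x R)"
  by (simp add: principal_def pr_def)

lemma pr_mult: assumes R: "is_subring R" shows "ideal_prod (pr x R) (pr y R) = pr (x*y) R"
proof
  show "ideal_prod (pr x R) (pr y R) \<subseteq> pr (x*y) R"
  proof (rule ip_sub)
    show "0 \<in> pr (x * y) R" using R by (auto simp: pr_def subring_01 intro: image_eqI[of _ _ 0])
    show "a + b \<in> pr (x * y) R" if "a \<in> pr (x * y) R" "b \<in> pr (x * y) R" for a b
      using that R by (auto simp: pr_def distrib_left[symmetric] intro!: image_eqI subring_add)
    show "a * b \<in> pr (x * y) R" if ab: "a \<in> pr x R" "b \<in> pr y R" for a b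
    proof -
      obtain r s where "r \<in> R" "s \<in> R" "a = x * r" "b = y * s" using ab unfolding pr_def by blast
      thus ?thesis using R by (auto simp: pr_def intro!: image_eqI[of _ _ "r*s"] subring_mult simp: ac_simps)
    qed
  qed
  show "pr (x*y) R \<subseteq> ideal_prod (pr x R) (pr y R)"
  proof
    fix z assume "z \<in> pr (x*y) R"
    then obtain r where r: "r \<in> R" "z = x*y*r" by (auto simp: pr_def)
    have "(x*1) * (y*r) \<in> ideal_prod (pr x R) (pr y R)"
      using r R by (intro ip_mult) (auto simp: pr_def subring_01)
    thus "z \<in> ideal_prod (pr x R) (pr y R)" using r by (simp add: ac_simps)
  qed
qed

lemma pr_one: "pr 1 R = R" by (simp add: pr_def)

lemma pr_submodule: assumes R: "is_subring R" shows "submodule R (pr x R)"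
  unfolding submodule_def
proof (intro conjI ballI)
  show "0 \<in> pr x R" unfolding pr_def using subring_01[OF R] by (auto intro: image_eqI[of _ _ 0])
  fix a b assume "a \<in> pr x R" "b \<in> pr x R"
  then obtain r s where "r \<in> R" "s \<in> R" "a = x * r" "b = x * s" unfolding pr_def by blast
  then show "a + b \<in> pr x R" unfolding pr_def using R
    by (auto simp: distrib_left[symmetric] intro!: image_eqI[of _ _ "r+s"] subring_add)
next
  fix r a assume "r \<in> R" "a \<in> pr x R"
  then obtain s where "s \<in> R" "a = x * s" unfolding pr_def by blast
  then show "r * a \<in> pr x R" unfolding pr_def using R \<open>r \<in> R\<close>
    by (auto simp: ac_simps intro!: image_eqI[of _ _ "r*s"] subring_mult)
qed

lemma pr_frac:
  assumes R: "domain_with_qf R" shows "frac_ideal R (pr x R)"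
proof -
  have sR: "is_subring R" using R by (rule dqf_subring)
  obtain a b where ab: "a \<in> R" "b \<in> R" "b \<noteq> 0" "x = a / b" using R unfolding domain_with_qf_def by blast
  have "(\<lambda>z. b * z) ` pr x R \<subseteq> R"
    using ab sR by (auto simp: pr_def intro: subring_mult)
  thus ?thesis using ab pr_submodule[OF sR] by (auto simp: frac_ideal_def)
qed

lemma pr_invertible:
  assumes R: "domain_with_qf R" and x: "x \<noteq> 0" shows "invertible_frac R (pr x R)"
  using pr_frac[OF R] pr_mult[OF dqf_subring[OF R], of x "inverse x"] x
  unfolding invertible_frac_def by (auto simp: pr_one intro!: exI[of _ "pr (inverse x) R"])

lemma pr_zero_not_inv:
  assumes R: "is_subring R" and "invertible_frac R (pr 0 R)" shows False
proof -
  obtain J where J: "ideal_prod (pr 0 R) J = R" using assms by (auto simp: invertible_frac_def)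
  have "pr 0 R = {0}" using R by (auto simp: pr_def subring_01 intro: image_eqI[of _ _ 0])
  hence "ideal_prod (pr 0 R) J \<subseteq> {0}" by (intro ip_sub) auto
  thus False using J subring_01[OF R] by auto
qed

lemma princ_iff: "domain_with_qf R \<Longrightarrow> I \<in> princ R \<longleftrightarrow> (\<exists>x. x \<noteq> 0 \<and> I = pr x R)"
proof
  assume R: "domain_with_qf R" and "I \<in> princ R"
  then obtain x where x: "invertible_frac R I" "I = pr x R" by (auto simp: princ_def principal_pr)
  have "x \<noteq> 0" using x pr_zero_not_inv[OF dqf_subring[OF R]] by blast
  thus "\<exists>x. x \<noteq> 0 \<and> I = pr x R" using x by blast
next
  assume R: "domain_with_qf R" and "\<exists>x. x \<noteq> 0 \<and> I = pr x R"
  then obtain x where "x \<noteq> 0" "I = pr x R" by blast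
  thus "I \<in> princ R" using pr_invertible[OF R] by (auto simp: princ_def principal_pr)
qed

lemma subgroup_princ:
  assumes R: "domain_with_qf R" shows "subgroup (princ R) (ideal_group R)"
proof -
  have sR: "is_subring R" using R by (rule dqf_subring)
  interpret G: group "ideal_group R" using group_ideal_group[OF sR] .
  show ?thesis
  proof (rule G.subgroupI)
    show "princ R \<subseteq> carrier (ideal_group R)" by (auto simp: princ_def ideal_group_def)
    have "pr 1 R \<in> princ R" using princ_iff[OF R, of "pr 1 R"] one_neq_zero by blast
    thus "princ R \<noteq> {}" by blast
    show "inv\<^bsub>ideal_group R\<^esub> a \<in> princ R" if a: "a \<in> princ R" for a
    proof -
      obtain x where x: "x \<noteq> 0" "a = pr x R" using a princ_iff[OF R] by auto
      have "inv\<^bsub>ideal_group R\<^esub> a = pr (inverse x) R"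
        apply (rule G.inv_equality)
        using x pr_mult[OF sR, of "inverse x" x] pr_invertible[OF R]
        by (auto simp: ideal_group_def pr_one)
      moreover have "inverse x \<noteq> 0" using x by simp
      ultimately show ?thesis using princ_iff[OF R] by blast
    qed
    show "a \<otimes>\<^bsub>ideal_group R\<^esub> b \<in> princ R" if "a \<in> princ R" "b \<in> princ R" for a b
      using that princ_iff[OF R] pr_mult[OF sR] by (auto simp: ideal_group_def) (metis no_zero_divisors)
  qed
qed

lemma normal_princ: "domain_with_qf R \<Longrightarrow> princ R \<lhd> ideal_group R"
  using comm_group.subgroup_imp_normal[OF comm_group_ideal_group[OF dqf_subring]] subgroup_princ
  by blast

lemma group_Pic: "domain_with_qf R \<Longrightarrow> group (Pic R)"
  unfolding Pic_def using normal.factorgroup_is_group normal_princ by blast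



lemma carrier_Pic: "carrier (Pic R) = {pic_class R I | I. invertible_frac R I}"
  by (auto simp: Pic_def carrier_FactGroup pic_class_def ideal_group_def)

lemma one_Pic: "\<one>\<^bsub>Pic R\<^esub> = princ R"
  by (simp add: Pic_def)

lemma pic_class_in: "invertible_frac R I \<Longrightarrow> pic_class R I \<in> carrier (Pic R)"
  by (auto simp: carrier_Pic)

lemma mult_Pic:
  assumes R: "domain_with_qf R" and I: "invertible_frac R I" and J: "invertible_frac R J"
  shows "pic_class R I \<otimes>\<^bsub>Pic R\<^esub> pic_class R J = pic_class R (ideal_prod I J)"
proof -
  interpret N: normal "princ R" "ideal_group R" using normal_princ[OF R] .
  show ?thesis using N.rcos_sum[of I J] I J
    by (simp add: Pic_def pic_class_def ideal_group_def)
qed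

lemma pic_class_eq_one:
  assumes R: "domain_with_qf R" and I: "invertible_frac R I"
  shows "pic_class R I = princ R \<longleftrightarrow> I \<in> princ R"
proof -
  interpret G: group "ideal_group R" using group_ideal_group[OF dqf_subring[OF R]] .
  interpret H: subgroup "princ R" "ideal_group R" using subgroup_princ[OF R] .
  have Ic: "I \<in> carrier (ideal_group R)" using I by (simp add: ideal_group_def)
  show ?thesis
  proof
    assume "pic_class R I = princ R"
    moreover have "I \<in> pic_class R I" unfolding pic_class_def
      by (rule G.rcos_self[OF Ic subgroup_princ[OF R]])
    ultimately show "I \<in> princ R" by simp
  next
    assume "I \<in> princ R"
    thus "pic_class R I = princ R" unfolding pic_class_def
      using H.rcos_const[OF G.is_group] by blast
  qed
qed

lemma pic_class_princ_mult:
  assumes R: "domain_with_qf R" and I: "invertible_frac R I" and P: "P \<in> princ R"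
  shows "pic_class R (ideal_prod P I) = pic_class R I"
proof -
  interpret G: group "ideal_group R" using group_ideal_group[OF dqf_subring[OF R]] .
  interpret H: subgroup "princ R" "ideal_group R" using subgroup_princ[OF R] .
  have Ic: "I \<in> carrier (ideal_group R)" using I by (simp add: ideal_group_def)
  have Pc: "P \<in> carrier (ideal_group R)" using P by (simp add: ideal_group_def princ_def)
  have "princ R #>\<^bsub>ideal_group R\<^esub> (P \<otimes>\<^bsub>ideal_group R\<^esub> I)
      = (princ R #>\<^bsub>ideal_group R\<^esub> P) #>\<^bsub>ideal_group R\<^esub> I"
    using G.coset_mult_assoc[OF H.subset Pc Ic] by simp
  also have "princ R #>\<^bsub>ideal_group R\<^esub> P = princ R" using H.rcos_const[OF G.is_group P] .
  finally show ?thesis by (simp add: pic_class_def ideal_group_def)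
qed

lemma pic_class_elem:
  assumes R: "domain_with_qf R" and I: "invertible_frac R I" and J: "J \<in> pic_class R I"
  shows "\<exists>P\<in>princ R. J = ideal_prod P I"
  using J unfolding pic_class_def r_coset_def by (auto simp: ideal_group_def)

lemma pic_class_self: 
  assumes R: "domain_with_qf R" and I: "invertible_frac R I"
  shows "I \<in> pic_class R I"
proof -
  interpret G: group "ideal_group R" using group_ideal_group[OF dqf_subring[OF R]] .
  have Ic: "I \<in> carrier (ideal_group R)" using I by (simp add: ideal_group_def)
  show ?thesis unfolding pic_class_def by (rule G.rcos_self[OF Ic subgroup_princ[OF R]])
qed

lemma pic_class_elem_inv:
  assumes R: "domain_with_qf R" and I: "invertible_frac R I" and J: "J \<in> pic_class R I"
  shows "invertible_frac R J \<and> pic_class R J = pic_class R I"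
proof -
  obtain P where P: "P \<in> princ R" "J = ideal_prod P I" using pic_class_elem[OF assms] by blast
  have "invertible_frac R J" using P I inv_frac_mult[OF dqf_subring[OF R]] by (auto simp: princ_def)
  thus ?thesis using pic_class_princ_mult[OF R I P(1)] P by simp
qed

lemma overring_dqf:
  assumes D: "domain_with_qf D" and T: "overring D T" shows "domain_with_qf T"
  using assms unfolding domain_with_qf_def overring_def by blast

lemma ext_base:
  assumes T: "is_subring T" and DT: "D \<subseteq> T" and D1: "1 \<in> D"
  shows "ideal_prod D T = T"
proof
  show "ideal_prod D T \<subseteq> T" using T DT
    by (intro ip_sub) (auto simp: subring_01 subring_add subring_mult)
  show "T \<subseteq> ideal_prod D T"
  proof
    fix t assume "t \<in> T"
    hence "1 * t \<in> ideal_prod D T" using D1 by (intro ip_mult)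
    thus "t \<in> ideal_prod D T" by simp
  qed
qed

lemma ext_mult:
  assumes T: "is_subring T"
  shows "ideal_prod (ideal_prod A T) (ideal_prod B T) = ideal_prod (ideal_prod A B) T"
proof -
  have "ideal_prod (ideal_prod A T) (ideal_prod B T) = ideal_prod A (ideal_prod T (ideal_prod B T))"
    by (simp add: ip_assoc)
  also have "ideal_prod T (ideal_prod B T) = ideal_prod (ideal_prod B T) T" by (simp add: ip_comm)
  also have "\<dots> = ideal_prod B (ideal_prod T T)" by (simp add: ip_assoc)
  also have "ideal_prod T T = T" using subring_ip_self[OF T] .
  also have "ideal_prod A (ideal_prod B T) = ideal_prod (ideal_prod A B) T" by (simp add: ip_assoc)
  finally show ?thesis .
qed

lemma ext_frac:
  assumes T: "is_subring T" and DT: "D \<subseteq> T" and I: "frac_ideal D I"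
  shows "frac_ideal T (ideal_prod I T)"
proof -
  obtain d where d: "d \<in> D" "d \<noteq> 0" "(\<lambda>x. d * x) ` I \<subseteq> D"
    using I unfolding frac_ideal_def by blast
  have dI: "d * i \<in> D" if "i \<in> I" for i using d that by auto
  have "ideal_prod I T \<subseteq> {x. d * x \<in> T}"
  proof (rule ip_sub)
    show "0 \<in> {x. d * x \<in> T}" using T by (simp add: subring_01)
    show "x + y \<in> {x. d * x \<in> T}" if "x \<in> {x. d * x \<in> T}" "y \<in> {x. d * x \<in> T}" for x y
      using that T by (simp add: distrib_left subring_add)
    show "a * b \<in> {x. d * x \<in> T}" if "a \<in> I" "b \<in> T" for a b
      using dI[OF that(1)] that(2) DT T by (auto simp flip: mult.assoc intro: subring_mult)
  qed
  thus ?thesis using d DT submodule_ip2[OF subring_submodule[OF T]]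
    unfolding frac_ideal_def by blast
qed

lemma ext_inv:
  assumes T: "is_subring T" and DT: "D \<subseteq> T" and D: "is_subring D" and I: "invertible_frac D I"
  shows "invertible_frac T (ideal_prod I T)"
proof -
  obtain I' where I': "frac_ideal D I'" "ideal_prod I I' = D" using I by (auto simp: invertible_frac_def)
  have "ideal_prod (ideal_prod I T) (ideal_prod I' T) = T"
    using ext_mult[OF T, of I I'] I'(2) ext_base[OF T DT] subring_01[OF D] by simp
  thus ?thesis using ext_frac[OF T DT] I I' unfolding invertible_frac_def by blast
qed

lemma ext_pr:
  assumes T: "is_subring T" and DT: "D \<subseteq> T" and D: "is_subring D"
  shows "ideal_prod (pr x D) T = pr x T"
proof
  show "ideal_prod (pr x D) T \<subseteq> pr x T"
  proof (rule ip_sub)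
    show "0 \<in> pr x T" using T by (auto simp: pr_def subring_01 intro: image_eqI[of _ _ 0])
    show "a + b \<in> pr x T" if "a \<in> pr x T" "b \<in> pr x T" for a b
      using pr_submodule[OF T, of x] that by (simp add: submodule_def)
    show "a * b \<in> pr x T" if ab: "a \<in> pr x D" "b \<in> T" for a b
    proof -
      obtain r where "r \<in> D" "a = x * r" using ab unfolding pr_def by blast
      thus ?thesis using ab DT T by (auto simp: pr_def ac_simps intro!: image_eqI[of _ _ "r*b"] subring_mult)
    qed
  qed
  show "pr x T \<subseteq> ideal_prod (pr x D) T"
  proof
    fix z assume "z \<in> pr x T"
    then obtain t where t: "t \<in> T" "z = x * t" unfolding pr_def by blast
    have "(x * 1) * t \<in> ideal_prod (pr x D) T"
      using t D by (intro ip_mult) (auto simp: pr_def subring_01)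
    thus "z \<in> ideal_prod (pr x D) T" using t by simp
  qed
qed

lemma pic_class_ext_indep:
  assumes D: "domain_with_qf D" and T: "overring D T" and I: "invertible_frac D I"
    and J: "J \<in> pic_class D I"
  shows "pic_class T (ideal_prod J T) = pic_class T (ideal_prod I T)"
proof -
  have TT: "domain_with_qf T" using overring_dqf[OF D T] .
  have sT: "is_subring T" and DT: "D \<subseteq> T" using T by (auto simp: overring_def)
  have sD: "is_subring D" using dqf_subring[OF D] .
  obtain P where P: "P \<in> princ D" "J = ideal_prod P I" using pic_class_elem[OF D I J] by blast
  obtain x where x: "x \<noteq> 0" "P = pr x D" using P(1) princ_iff[OF D] by blast
  have "ideal_prod J T = ideal_prod (ideal_prod P T) (ideal_prod I T)"
    using P(2) ext_mult[OF sT] by simp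
  also have "ideal_prod P T = pr x T" using x ext_pr[OF sT DT sD] by simp
  finally have eq: "ideal_prod J T = ideal_prod (pr x T) (ideal_prod I T)" .
  have "pr x T \<in> princ T" using princ_iff[OF TT] x by blast
  thus ?thesis using eq pic_class_princ_mult[OF TT ext_inv[OF sT DT sD I]] by simp
qed



lemma flat_key:
  assumes D: "domain_with_qf D" and T: "overring D T" and fl: "flat_over D T" and x: "x \<in> T"
  shows "1 \<in> ideal_prod {c \<in> D. c * x \<in> D} T"
proof -
  have sD: "is_subring D" using dqf_subring[OF D] .
  have sT: "is_subring T" and DT: "D \<subseteq> T" using T by (auto simp: overring_def)
  obtain a b where ab: "a \<in> D" "b \<in> D" "b \<noteq> 0" "x = a / b" using D unfolding domain_with_qf_def by blast
  define A where "A i = (if i = (0::nat) then a else - b)" for i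
  define X where "X i = (if i = (0::nat) then 1 else x)" for i
  have h1: "\<forall>i<2. A i \<in> D \<and> X i \<in> T"
    using ab sD sT x by (auto simp: A_def X_def subring_uminus subring_01)
  have h2: "(\<Sum>i<2. A i * X i) = 0"
    using ab by (simp add: numeral_2_eq_2 A_def X_def)
  obtain m :: nat and bb y where
    y: "\<forall>j<m. y j \<in> T" and bbD: "\<forall>i<2. \<forall>j<m. bb i j \<in> D"
    and xe: "\<forall>i<2. X i = (\<Sum>j<m. bb i j * y j)" and rel: "\<forall>j<m. (\<Sum>i<2. A i * bb i j) = 0"
    using mp[OF spec[OF spec[OF spec[OF fl[unfolded flat_over_def], of 2], of A], of X] conjI[OF h1 h2]]
    by blast
  have one: "1 = (\<Sum>j<m. bb 0 j * y j)" using xe[rule_format, of 0] by (simp add: X_def)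
  have "bb 0 j \<in> {c \<in> D. c * x \<in> D}" if "j < m" for j
  proof -
    have "a * bb 0 j + (- b) * bb 1 j = 0" using rel that by (simp add: numeral_2_eq_2 A_def)
    hence e: "a * bb 0 j = b * bb 1 j" by (simp add: algebra_simps)
    have "b * (bb 0 j * x) = a * bb 0 j" using ab(3,4) by (simp add: field_simps)
    hence "b * bb 1 j = b * (bb 0 j * x)" using e by metis
    hence "bb 1 j = bb 0 j * x" using ab(3) by simp
    moreover have "bb 1 j \<in> D" "bb 0 j \<in> D" using bbD that by auto
    ultimately show ?thesis by simp
  qed
  thus ?thesis using one y by (intro ipI[where n=m and f="bb 0" and g=y]) auto
qed

lemma ideal_ext:
  assumes D: "domain_with_qf D" and T: "overring D T" and fl: "flat_over D T"
    and J: "submodule T J" "J \<subseteq> T"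
  shows "ideal_prod (J \<inter> D) T = J"
proof
  have sT: "is_subring T" and DT: "D \<subseteq> T" using T by (auto simp: overring_def)
  show "ideal_prod (J \<inter> D) T \<subseteq> J"
    using J by (intro ip_sub) (auto simp: submodule_def, metis mult.commute)
  show "J \<subseteq> ideal_prod (J \<inter> D) T"
  proof
    fix x assume xJ: "x \<in> J"
    have "x * 1 \<in> ideal_prod (J \<inter> D) T"
    proof (rule ip_scal[OF flat_key[OF D T fl]])
      show "x \<in> T" using xJ J by auto
      fix c assume "c \<in> {c \<in> D. c * x \<in> D}"
      thus "x * c \<in> J \<inter> D" using J xJ DT by (auto simp: submodule_def mult.commute)
    qed
    thus "x \<in> ideal_prod (J \<inter> D) T" by simp
  qed
qed

lemma ip_one_int:
  assumes T: "is_subring T" and A: "1 \<in> ideal_prod A T" and B: "1 \<in> ideal_prod B T"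
    and C: "0 \<in> C" "\<And>x y. x \<in> C \<Longrightarrow> y \<in> C \<Longrightarrow> x + y \<in> C"
    "\<And>a b. a \<in> A \<Longrightarrow> b \<in> B \<Longrightarrow> a * b \<in> C"
  shows "1 \<in> ideal_prod C T"
proof -
  have "1 * 1 \<in> ideal_prod (ideal_prod A B) T"
    using ip_mult_ext[OF A B] T by (simp add: subring_mult)
  moreover have "ideal_prod A B \<subseteq> C" using C by (intro ip_sub)
  ultimately show ?thesis using ip_mono[of "ideal_prod A B" C T T] by auto
qed

lemma ip_one_D:
  assumes T: "is_subring T" and "1 \<in> A" shows "1 \<in> ideal_prod A T"
  using ip_mult[OF assms(2) subring_01[OF T, THEN conjunct2]] by simp

lemma flat_finite:
  assumes D: "domain_with_qf D" and T: "overring D T" and fl: "flat_over D T"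
    and S: "finite S" "S \<subseteq> T"
  shows "1 \<in> ideal_prod {c \<in> D. \<forall>s\<in>S. c * s \<in> D} T"
  using S
proof (induction S rule: finite_induct)
  have sD: "is_subring D" using dqf_subring[OF D] .
  have sT: "is_subring T" using T by (auto simp: overring_def)
  case empty
  show ?case using ip_one_D[OF sT] subring_01[OF sD] by simp
next
  case (insert s S)
  have sD: "is_subring D" using dqf_subring[OF D] .
  have sT: "is_subring T" using T by (auto simp: overring_def)
  show ?case
  proof (rule ip_one_int[OF sT insert.IH flat_key[OF D T fl]])
    show "S \<subseteq> T" "s \<in> T" using insert by auto
    show "0 \<in> {c \<in> D. \<forall>s\<in>insert s S. c * s \<in> D}" using sD by (simp add: subring_01)
    show "x + y \<in> {c \<in> D. \<forall>s\<in>insert s S. c * s \<in> D}"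
      if "x \<in> {c \<in> D. \<forall>s\<in>insert s S. c * s \<in> D}" "y \<in> {c \<in> D. \<forall>s\<in>insert s S. c * s \<in> D}" for x y
      using that sD by (auto simp: distrib_right subring_add)
    show "a * b \<in> {c \<in> D. \<forall>s\<in>insert s S. c * s \<in> D}"
      if "a \<in> {c \<in> D. \<forall>s\<in>S. c * s \<in> D}" "b \<in> {c \<in> D. c * s \<in> D}" for a b
    proof -
      have "a * b \<in> D" using that sD by (auto simp: subring_mult)
      moreover have "a * b * s \<in> D" using that sD subring_mult[OF sD, of a "b*s"] by (auto simp: mult.assoc)
      moreover have "a * b * s' \<in> D" if "s' \<in> S" for s'
        using that \<open>a \<in> _\<close> \<open>b \<in> _\<close> sD subring_mult[OF sD, of b "a*s'"] by (auto simp: ac_simps)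
      ultimately show ?thesis by auto
    qed
  qed
qed

lemma jaffard_facts:
  assumes "jaffard D \<Theta>"
  shows "\<And>T. T \<in> \<Theta> \<Longrightarrow> overring D T \<and> flat_over D T"
    and "\<And>I. ring_ideal D I \<Longrightarrow> I = (\<Inter>T\<in>\<Theta>. ideal_prod I T)"
    and "\<And>T T'. T \<in> \<Theta> \<Longrightarrow> T' \<in> \<Theta> \<Longrightarrow> T \<noteq> T' \<Longrightarrow> ideal_prod T T' = UNIV"
    and "\<And>x. x \<in> D \<Longrightarrow> x \<noteq> 0 \<Longrightarrow> finite {T\<in>\<Theta>. \<not> (\<exists>y\<in>T. x * y = 1)}"
proof -
  have P: "pre_jaffard D \<Theta>" and LF: "\<forall>x\<in>D. x \<noteq> 0 \<longrightarrow> finite {T\<in>\<Theta>. \<not> (\<exists>y\<in>T. x * y = 1)}"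
    using assms unfolding jaffard_def by auto
  note P' = P[unfolded pre_jaffard_def]
  show "\<And>T. T \<in> \<Theta> \<Longrightarrow> overring D T \<and> flat_over D T"
    using P'[THEN conjunct2, THEN conjunct1] by blast
  show "\<And>I. ring_ideal D I \<Longrightarrow> I = (\<Inter>T\<in>\<Theta>. ideal_prod I T)"
    using P'[THEN conjunct2, THEN conjunct2, THEN conjunct1] by blast
  show "\<And>T T'. T \<in> \<Theta> \<Longrightarrow> T' \<in> \<Theta> \<Longrightarrow> T \<noteq> T' \<Longrightarrow> ideal_prod T T' = UNIV"
    using P'[THEN conjunct2, THEN conjunct2, THEN conjunct2, THEN conjunct1] by blast
  show "\<And>x. x \<in> D \<Longrightarrow> x \<noteq> 0 \<Longrightarrow> finite {T\<in>\<Theta>. \<not> (\<exists>y\<in>T. x * y = 1)}"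
    using LF by blast
qed

lemma lemma_X:
  assumes D: "domain_with_qf D" and J: "jaffard D \<Theta>" and T: "T \<in> \<Theta>" and T': "T' \<in> \<Theta>"
    and ne: "T \<noteq> T'" and a: "a \<in> D" "a \<noteq> 0"
  shows "1 \<in> ideal_prod {c \<in> D. \<exists>t\<in>T. c = a * t} T'"
proof -
  have sD: "is_subring D" using dqf_subring[OF D] .
  have oT: "overring D T" and oT': "overring D T'" "flat_over D T'" using jaffard_facts(1)[OF J] T T' by auto
  have sT: "is_subring T" and DT: "D \<subseteq> T" using oT by (auto simp: overring_def)
  have sT': "is_subring T'" and DT': "D \<subseteq> T'" using oT' by (auto simp: overring_def)
  have "inverse a \<in> ideal_prod T T'" using jaffard_facts(3)[OF J T T' ne] by simp
  then obtain n :: nat and f g where fg: "inverse a = (\<Sum>i<n. f i * g i)" "\<forall>i<n. f i \<in> T \<and> g i \<in> T'"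
    using ipE by blast
  have L: "1 \<in> ideal_prod {c \<in> D. \<forall>s\<in>g ` {..<n}. c * s \<in> D} T'"
    using fg by (intro flat_finite[OF D oT']) auto
  have "{c \<in> D. \<forall>s\<in>g ` {..<n}. c * s \<in> D} \<subseteq> {c \<in> D. \<exists>t\<in>T. c = a * t}"
  proof safe
    fix c assume c: "c \<in> D" "\<forall>s\<in>g ` {..<n}. c * s \<in> D"
    have "f i * (c * g i) \<in> T" if "i < n" for i
    proof -
      have "c * g i \<in> D" using c that by auto
      thus ?thesis using fg that DT subring_mult[OF sT, of "f i" "c * g i"] by blast
    qed
    hence "(\<Sum>i<n. f i * (c * g i)) \<in> T"
      using sT by (intro subring_sum) auto
    moreover have "c = a * (\<Sum>i<n. f i * (c * g i))"
    proof -
      have "(\<Sum>i<n. f i * (c * g i)) = c * (\<Sum>i<n. f i * g i)"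
        by (simp add: sum_distrib_left ac_simps)
      thus ?thesis using fg(1)[symmetric] a by simp
    qed
    ultimately show "\<exists>t\<in>T. c = a * t" by blast
  qed
  thus ?thesis using L ip_mono[of _ _ T' T'] by blast
qed



lemma ip_zero_set: "A \<subseteq> {0} \<Longrightarrow> ideal_prod A B \<subseteq> {0}"
  by (intro ip_sub) auto

lemma one_ext:
  assumes T: "is_subring T" and A: "A \<subseteq> T" and one: "1 \<in> ideal_prod A T"
  shows "ideal_prod A T = T"
proof
  show "ideal_prod A T \<subseteq> T" using T A by (intro ip_sub) (auto simp: subring_01 subring_add subring_mult)
  show "T \<subseteq> ideal_prod A T"
  proof
    fix t assume t: "t \<in> T"
    have "t * 1 \<in> ideal_prod A T" using ip_scal2[OF one, of t T] t T by (simp add: subring_mult)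
    thus "t \<in> ideal_prod A T" by simp
  qed
qed

lemma D_char:
  assumes D: "domain_with_qf D" and J: "jaffard D \<Theta>" and x: "\<forall>T\<in>\<Theta>. x \<in> T"
  shows "x \<in> D"
proof -
  have sD: "is_subring D" using dqf_subring[OF D] .
  have "ring_ideal D D" using subring_submodule[OF sD] by (simp add: ring_ideal_def)
  hence "D = (\<Inter>T\<in>\<Theta>. ideal_prod D T)" using jaffard_facts(2)[OF J] by blast
  also have "\<dots> = (\<Inter>T\<in>\<Theta>. T)"
  proof (rule INF_cong[OF refl])
    fix T assume "T \<in> \<Theta>"
    hence "overring D T" using jaffard_facts(1)[OF J] by blast
    thus "ideal_prod D T = T" using ext_base[of T D] subring_01[OF sD] by (auto simp: overring_def)
  qed
  finally show ?thesis using x by blast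
qed

lemma main_construct:
  assumes D: "domain_with_qf D" and J: "jaffard D \<Theta>" and T0: "T0 \<in> \<Theta>"
    and JJ: "invertible_frac T0 JJ" "JJ \<subseteq> T0"
  shows "invertible_frac D (JJ \<inter> D) \<and> ideal_prod (JJ \<inter> D) T0 = JJ
     \<and> (\<forall>T\<in>\<Theta>. T \<noteq> T0 \<longrightarrow> ideal_prod (JJ \<inter> D) T = T)"
proof -
  define I where "I = JJ \<inter> D"
  have sD: "is_subring D" using dqf_subring[OF D] .
  have oT0: "overring D T0" and fl0: "flat_over D T0" using jaffard_facts(1)[OF J T0] by auto
  have sT0: "is_subring T0" and DT0: "D \<subseteq> T0" using oT0 by (auto simp: overring_def)
  have sJJ: "submodule T0 JJ" using JJ(1) by (rule inv_frac_submodule)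
  obtain H where H: "frac_ideal T0 H" "ideal_prod JJ H = T0" using JJ(1) by (auto simp: invertible_frac_def)
  have ext0: "ideal_prod I T0 = JJ" unfolding I_def by (rule ideal_ext[OF D oT0 fl0 sJJ JJ(2)])
  have "\<exists>j\<in>JJ. j \<noteq> 0"
  proof (rule ccontr)
    assume "\<not> ?thesis"
    hence "JJ \<subseteq> {0}" by auto
    hence "ideal_prod JJ H \<subseteq> {0}" by (rule ip_zero_set)
    thus False using H(2) subring_01[OF sT0] by auto
  qed
  then obtain j where j: "j \<in> JJ" "j \<noteq> 0" by blast
  have "1 \<in> ideal_prod {c \<in> D. c * j \<in> D} T0" using flat_key[OF D oT0 fl0] j JJ(2) by auto
  have "\<exists>c\<in>{c \<in> D. c * j \<in> D}. c \<noteq> 0"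
  proof (rule ccontr)
    assume "\<not> ?thesis"
    hence "{c \<in> D. c * j \<in> D} \<subseteq> {0}" by auto
    hence "ideal_prod {c \<in> D. c * j \<in> D} T0 \<subseteq> {0}" by (rule ip_zero_set)
    thus False using \<open>1 \<in> ideal_prod {c \<in> D. c * j \<in> D} T0\<close> by auto
  qed
  then obtain c where c: "c \<in> D" "c * j \<in> D" "c \<noteq> 0" by blast
  define a where "a = c * j"
  have aI: "a \<in> I" using c j sJJ DT0 by (auto simp: a_def I_def submodule_def)
  have a0: "a \<noteq> 0" using c j by (simp add: a_def)
  have aD: "a \<in> D" using aI by (simp add: I_def)
  have others: "ideal_prod I T = T" if T: "T \<in> \<Theta>" "T \<noteq> T0" for T
  proof -
    have oT: "overring D T" using jaffard_facts(1)[OF J] T by blast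
    have sT: "is_subring T" and DT: "D \<subseteq> T" using oT by (auto simp: overring_def)
    have "1 \<in> ideal_prod {c \<in> D. \<exists>t\<in>T0. c = a * t} T"
      using lemma_X[OF D J T0 T(1) T(2)[symmetric] aD a0] .
    moreover have "{c \<in> D. \<exists>t\<in>T0. c = a * t} \<subseteq> I"
      using aI sJJ by (auto simp: I_def submodule_def mult.commute)
    ultimately have "1 \<in> ideal_prod I T" using ip_mono[of _ I T T] by blast
    moreover have "I \<subseteq> T" using DT by (auto simp: I_def)
    ultimately show ?thesis using one_ext[OF sT] by blast
  qed
  define I' where "I' = {x. \<forall>i\<in>I. x * i \<in> D}"
  have sI: "submodule D I" using sJJ DT0 sD
    by (auto simp: I_def submodule_def subring_01 subring_add subring_mult)
  have frI: "frac_ideal D I" using sI sD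
    by (auto simp: frac_ideal_def I_def subring_01 intro!: bexI[of _ 1])
  have sI': "submodule D I'" using sD
    by (auto simp: submodule_def I'_def subring_01 distrib_right subring_add mult.assoc subring_mult)
  have frI': "frac_ideal D I'"
    unfolding frac_ideal_def
  proof (intro conjI sI' bexI[of _ a])
    show "a \<noteq> 0" by (rule a0)
    show "a \<in> D" by (rule aD)
    show "(\<lambda>x. a * x) ` I' \<subseteq> D" using aI by (auto simp: I'_def mult.commute)
  qed
  define N where "N = ideal_prod I I'"
  have sN: "submodule D N" unfolding N_def using submodule_ip[OF sI] .
  have ND: "N \<subseteq> D" unfolding N_def using sD
    by (intro ip_sub) (auto simp: I'_def subring_01 subring_add mult.commute)
  have compl: "N = (\<Inter>T\<in>\<Theta>. ideal_prod N T)"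
    using jaffard_facts(2)[OF J] sN ND by (simp add: ring_ideal_def)
  have hclaim: "h \<in> ideal_prod I' T0" if h: "h \<in> H" for h
  proof -
    obtain p q where pq: "p \<in> D" "q \<in> D" "q \<noteq> 0" "h = p / q" using D unfolding domain_with_qf_def by blast
    define F where "F = {T\<in>\<Theta>. T \<noteq> T0 \<and> \<not> (\<exists>y\<in>T. q * y = 1)}"
    have finF: "finite F"
      using jaffard_facts(4)[OF J pq(2,3)] by (rule rev_finite_subset) (auto simp: F_def)
    have G: "1 \<in> ideal_prod {c \<in> D. \<forall>T\<in>F'. c * h \<in> T} T0" if "finite F'" "F' \<subseteq> F" for F'
      using that
    proof (induction F' rule: finite_induct)
      case empty
      show ?case using ip_one_D[OF sT0] subring_01[OF sD] by simp
    next
      case (insert T F')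
      have TT: "T \<in> \<Theta>" "T \<noteq> T0" using insert.prems by (auto simp: F_def)
      have oT: "overring D T" using jaffard_facts(1)[OF J] TT by blast
      have sT: "is_subring T" and DT: "D \<subseteq> T" using oT by (auto simp: overring_def)
      have IH: "1 \<in> ideal_prod {c \<in> D. \<forall>T\<in>F'. c * h \<in> T} T0" using insert by auto
      have FT: "\<And>T'. T' \<in> F' \<Longrightarrow> is_subring T' \<and> D \<subseteq> T'"
        using insert.prems jaffard_facts(1)[OF J] by (auto simp: F_def overring_def)
      show ?case
      proof (rule ip_one_int[OF sT0 IH lemma_X[OF D J TT(1) T0 TT(2) pq(2,3)]])
        show "0 \<in> {c \<in> D. \<forall>T\<in>insert T F'. c * h \<in> T}"
          using sD sT FT by (auto simp: subring_01)
        show "x + y \<in> {c \<in> D. \<forall>T\<in>insert T F'. c * h \<in> T}"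
          if "x \<in> {c \<in> D. \<forall>T\<in>insert T F'. c * h \<in> T}" "y \<in> {c \<in> D. \<forall>T\<in>insert T F'. c * h \<in> T}" for x y
          using that sD sT FT by (auto simp: distrib_right subring_add)
        show "x * y \<in> {c \<in> D. \<forall>T\<in>insert T F'. c * h \<in> T}"
          if xy: "x \<in> {c \<in> D. \<forall>T\<in>F'. c * h \<in> T}" "y \<in> {c \<in> D. \<exists>t\<in>T. c = q * t}" for x y
        proof -
          obtain t where t: "t \<in> T" "y = q * t" using xy(2) by blast
          have xD: "x \<in> D" and yD: "y \<in> D" using xy by auto
          have "x * y \<in> D" using xD yD sD by (simp add: subring_mult)
          moreover have "x * y * h \<in> T"
          proof -
            have eq: "x * y * h = (x * p) * t" using t pq by (simp add: field_simps)
            have "x * p \<in> T" using xD pq(1) DT sT by (auto intro: subring_mult)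
            hence "(x * p) * t \<in> T" using t sT by (auto intro: subring_mult)
            thus ?thesis by (simp only: eq)
          qed
          moreover have "x * y * h \<in> T'" if "T' \<in> F'" for T'
          proof -
            have "x * h \<in> T'" using xy(1) that by auto
            moreover have "y \<in> T'" using FT[OF that] yD by auto
            ultimately have "(x * h) * y \<in> T'" using FT[OF that] by (simp add: subring_mult)
            thus ?thesis by (simp add: ac_simps)
          qed
          ultimately show ?thesis by auto
        qed
      qed
    qed
    have one: "1 \<in> ideal_prod {c \<in> D. \<forall>T\<in>F. c * h \<in> T} T0" using G[OF finF] by simp
    have hc: "h * c \<in> I'" if c: "c \<in> {c \<in> D. \<forall>T\<in>F. c * h \<in> T}" for c
      unfolding I'_def
    proof (intro CollectI ballI)
      fix i assume iI: "i \<in> I"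
      have iD: "i \<in> D" and iJ: "i \<in> JJ" using iI by (auto simp: I_def)
      have cD: "c \<in> D" using c by simp
      show "h * c * i \<in> D"
      proof (rule D_char[OF D J], intro ballI)
        fix T assume T: "T \<in> \<Theta>"
        have oT: "overring D T" using jaffard_facts(1)[OF J] T by blast
        have sT: "is_subring T" and DT: "D \<subseteq> T" using oT by (auto simp: overring_def)
        consider "T = T0" | "T \<in> F" | "T \<noteq> T0" "T \<notin> F" by blast
        thus "h * c * i \<in> T"
        proof cases
          case 1
          have "i * h \<in> T0" using ip_mult[OF iJ h] H(2) by simp
          moreover have "c \<in> T0" using cD DT0 by auto
          ultimately have "(i * h) * c \<in> T0" using sT0 by (simp add: subring_mult)
          thus ?thesis using 1 by (simp add: ac_simps)
        next
          case 2
          hence "c * h \<in> T" using c by auto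
          moreover have "i \<in> T" using iD DT by auto
          ultimately have "(c * h) * i \<in> T" using sT by (simp add: subring_mult)
          thus ?thesis by (simp add: ac_simps)
        next
          case 3
          then obtain y where y: "y \<in> T" "q * y = 1" using T by (auto simp: F_def)
          have "inverse q = y" using y(2) by (rule inverse_unique)
          hence "h = p * y" using pq(4) by (simp add: divide_inverse)
          moreover have "p \<in> T" "c \<in> T" "i \<in> T" using pq cD iD DT by auto
          ultimately show ?thesis using y sT by (simp add: subring_mult)
        qed
      qed
    qed
    have "h * 1 \<in> ideal_prod I' T0" using ip_scal[OF one hc] by blast
    thus ?thesis by simp
  qed
  have oneN: "1 \<in> ideal_prod N T" if T: "T \<in> \<Theta>" for T
  proof (cases "T = T0")
    case True
    have "ideal_prod JJ H \<subseteq> ideal_prod N T0"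
    proof (rule ip_sub)
      show "0 \<in> ideal_prod N T0" by (rule ip_zero)
      show "x + y \<in> ideal_prod N T0" if "x \<in> ideal_prod N T0" "y \<in> ideal_prod N T0" for x y
        using that by (rule ip_add)
      show "x * y \<in> ideal_prod N T0" if "x \<in> JJ" "y \<in> H" for x y
      proof -
        have "x \<in> ideal_prod I T0" using that ext0 by simp
        moreover have "y \<in> ideal_prod I' T0" using hclaim that by simp
        ultimately show ?thesis unfolding N_def using sT0
          by (intro ip_mult_ext) (auto simp: subring_mult)
      qed
    qed
    thus ?thesis using True H(2) subring_01[OF sT0] by auto
  next
    case False
    have "I \<subseteq> N"
    proof
      fix i assume "i \<in> I"
      moreover have "1 \<in> I'" using \<open>i \<in> I\<close> by (auto simp: I'_def I_def)
      ultimately have "i * 1 \<in> N" unfolding N_def by (rule ip_mult)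
      thus "i \<in> N" by simp
    qed
    hence "ideal_prod I T \<subseteq> ideal_prod N T" by (rule ip_mono) simp
    moreover have "1 \<in> T" using jaffard_facts(1)[OF J T] by (auto simp: overring_def subring_01)
    ultimately show ?thesis using others[OF T False] by auto
  qed
  have "1 \<in> N" using compl oneN by blast
  have "N = D"
  proof
    show "N \<subseteq> D" by (rule ND)
    show "D \<subseteq> N"
    proof
      fix r assume "r \<in> D"
      hence "r * 1 \<in> N" using sN \<open>1 \<in> N\<close> unfolding submodule_def by blast
      thus "r \<in> N" by simp
    qed
  qed
  hence "invertible_frac D I" using frI frI' unfolding invertible_frac_def N_def by blast
  thus ?thesis using ext0 others unfolding I_def by blast
qed



lemma pic_map_class:
  assumes D: "domain_with_qf D" and J: "jaffard D \<Theta>" and I: "invertible_frac D I"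
  shows "pic_map D \<Theta> (pic_class D I) = (\<lambda>T\<in>\<Theta>. pic_class T (ideal_prod I T))"
proof -
  have "(SOME J. J \<in> pic_class D I) \<in> pic_class D I"
    by (rule someI[of _ I]) (rule pic_class_self[OF D I])
  thus ?thesis unfolding pic_map_def
    using pic_class_ext_indep[OF D _ I] jaffard_facts(1)[OF J]
    by (intro restrict_ext) blast
qed

lemma pic_one_self:
  assumes T: "domain_with_qf T" shows "pic_class T T = princ T"
proof -
  have "T \<in> princ T" using princ_iff[OF T, of T] pr_one[of T] by (metis one_neq_zero)
  thus ?thesis using pic_class_eq_one[OF T inv_frac_one[OF dqf_subring[OF T]]] by simp
qed

lemma fin_support:
  assumes D: "domain_with_qf D" and J: "jaffard D \<Theta>" and I: "invertible_frac D I"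
  shows "finite {T\<in>\<Theta>. pic_class T (ideal_prod I T) \<noteq> princ T}"
proof -
  have sD: "is_subring D" using dqf_subring[OF D] .
  obtain d where d: "d \<in> D" "d \<noteq> 0" "(\<lambda>x. d * x) ` I \<subseteq> D"
    using I unfolding invertible_frac_def frac_ideal_def by blast
  obtain I' where I': "ideal_prod I I' = D" using I unfolding invertible_frac_def by blast
  have "\<exists>i\<in>I. i \<noteq> 0"
  proof (rule ccontr)
    assume "\<not> ?thesis"
    hence "I \<subseteq> {0}" by auto
    hence "ideal_prod I I' \<subseteq> {0}" by (rule ip_zero_set)
    thus False using I' subring_01[OF sD] by auto
  qed
  then obtain i where i: "i \<in> I" "i \<noteq> 0" by blast
  define a where "a = d * i"
  have aD: "a \<in> D" using d i by (auto simp: a_def)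
  have a0: "a \<noteq> 0" using d i by (simp add: a_def)
  have "{T\<in>\<Theta>. pic_class T (ideal_prod I T) \<noteq> princ T} \<subseteq> {T\<in>\<Theta>. \<not> (\<exists>y\<in>T. a * y = 1)}"
  proof (rule subsetI, rule ccontr)
    fix T assume "T \<in> {T\<in>\<Theta>. pic_class T (ideal_prod I T) \<noteq> princ T}"
      and "T \<notin> {T\<in>\<Theta>. \<not> (\<exists>y\<in>T. a * y = 1)}"
    then obtain y where T: "T \<in> \<Theta>" and y: "y \<in> T" "a * y = 1"
      and ne: "pic_class T (ideal_prod I T) \<noteq> princ T" by blast
    have oT: "overring D T" using jaffard_facts(1)[OF J T] by blast
    have sT: "is_subring T" and DT: "D \<subseteq> T" using oT by (auto simp: overring_def)
    have TT: "domain_with_qf T" using overring_dqf[OF D oT] .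
    have "ideal_prod I T = pr (inverse d) T"
    proof
      show "ideal_prod I T \<subseteq> pr (inverse d) T"
      proof (rule ip_sub)
        show "0 \<in> pr (inverse d) T" "\<And>x y. x \<in> pr (inverse d) T \<Longrightarrow> y \<in> pr (inverse d) T \<Longrightarrow> x + y \<in> pr (inverse d) T"
          using pr_submodule[OF sT, of "inverse d"] by (auto simp: submodule_def)
        fix u t assume u: "u \<in> I" and t: "t \<in> T"
        have "d * u \<in> T" using d u DT by auto
        hence "(d * u) * t \<in> T" using t sT by (simp add: subring_mult)
        moreover have "u * t = inverse d * ((d * u) * t)" using d by simp
        ultimately show "u * t \<in> pr (inverse d) T" unfolding pr_def by blast
      qed
      show "pr (inverse d) T \<subseteq> ideal_prod I T"
      proof
        fix z assume "z \<in> pr (inverse d) T"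
        then obtain t where t: "t \<in> T" "z = inverse d * t" unfolding pr_def by blast
        have "inverse d = i * y" using y(2) d(2) unfolding a_def
          by (metis inverse_unique mult.assoc)
        hence "z = i * (y * t)" using t by (simp add: mult.assoc)
        moreover have "y * t \<in> T" using y t sT by (simp add: subring_mult)
        ultimately show "z \<in> ideal_prod I T" using ip_mult[OF i(1)] by simp
      qed
    qed
    moreover have "inverse d \<noteq> 0" using d by simp
    ultimately have "ideal_prod I T \<in> princ T" using princ_iff[OF TT] by blast
    hence "pic_class T (ideal_prod I T) = princ T"
      using pic_class_eq_one[OF TT ext_inv[OF sT DT sD I]] by simp
    thus False using ne by simp
  qed
  thus ?thesis using jaffard_facts(4)[OF J aD a0] by (rule finite_subset)
qed



lemma delta_in_image:
  assumes D: "domain_with_qf D" and J: "jaffard D \<Theta>" and T0: "T0 \<in> \<Theta>"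
    and c0: "c0 \<in> carrier (Pic T0)"
  shows "\<exists>I. invertible_frac D I \<and>
     (\<lambda>T\<in>\<Theta>. pic_class T (ideal_prod I T)) = (\<lambda>T\<in>\<Theta>. if T = T0 then c0 else princ T)"
proof -
  have oT0: "overring D T0" using jaffard_facts(1)[OF J T0] by blast
  have sT0: "is_subring T0" and DT0: "D \<subseteq> T0" using oT0 by (auto simp: overring_def)
  have TT0: "domain_with_qf T0" using overring_dqf[OF D oT0] .
  obtain J0 where J0: "invertible_frac T0 J0" "c0 = pic_class T0 J0" using c0 by (auto simp: carrier_Pic)
  obtain d where d: "d \<in> T0" "d \<noteq> 0" "(\<lambda>x. d * x) ` J0 \<subseteq> T0"
    using J0(1) unfolding invertible_frac_def frac_ideal_def by blast
  define JJ where "JJ = ideal_prod (pr d T0) J0"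
  have Pd: "pr d T0 \<in> princ T0" using princ_iff[OF TT0] d by blast
  have JJi: "invertible_frac T0 JJ" unfolding JJ_def
    using inv_frac_mult[OF sT0 pr_invertible[OF TT0 d(2)] J0(1)] .
  have JJs: "JJ \<subseteq> T0" unfolding JJ_def
  proof (rule ip_sub)
    show "0 \<in> T0" using sT0 by (simp add: subring_01)
    show "x + y \<in> T0" if "x \<in> T0" "y \<in> T0" for x y using that sT0 by (simp add: subring_add)
    show "u * v \<in> T0" if uv: "u \<in> pr d T0" "v \<in> J0" for u v
    proof -
      obtain r where r: "r \<in> T0" "u = d * r" using uv(1) unfolding pr_def by blast
      have "d * v \<in> T0" using d uv(2) by auto
      hence "r * (d * v) \<in> T0" using r sT0 by (simp add: subring_mult)
      thus ?thesis using r by (simp add: ac_simps)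
    qed
  qed
  have cJJ: "pic_class T0 JJ = c0" unfolding JJ_def using pic_class_princ_mult[OF TT0 J0(1) Pd] J0(2) by simp
  obtain I where I: "invertible_frac D I" "ideal_prod I T0 = JJ" "\<forall>T\<in>\<Theta>. T \<noteq> T0 \<longrightarrow> ideal_prod I T = T"
    using main_construct[OF D J T0 JJi JJs] by blast
  have "(\<lambda>T\<in>\<Theta>. pic_class T (ideal_prod I T)) = (\<lambda>T\<in>\<Theta>. if T = T0 then c0 else princ T)"
  proof (rule restrict_ext)
    fix T assume T: "T \<in> \<Theta>"
    show "pic_class T (ideal_prod I T) = (if T = T0 then c0 else princ T)"
    proof (cases "T = T0")
      case True thus ?thesis using I(2) cJJ by simp
    next
      case False
      have "domain_with_qf T" using overring_dqf[OF D] jaffard_facts(1)[OF J T] by blast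
      thus ?thesis using False I(3) T pic_one_self by simp
    qed
  qed
  thus ?thesis using I(1) by blast
qed

theorem proposition4p5:
  fixes D :: "'k::field set" and \<Theta> :: "'k set set"
  assumes "domain_with_qf D" and "jaffard D \<Theta>"
  shows "group (Pic D) \<and> (\<forall>T\<in>\<Theta>. group (Pic T))
    \<and> subgroup (Pic_rel D \<Theta>) (Pic D)
    \<and> pic_map D \<Theta> \<in> hom (Pic D) (sum_group \<Theta> Pic)
    \<and> (\<forall>I. invertible_frac D I \<longrightarrow>
          pic_map D \<Theta> (pic_class D I) = (\<lambda>T\<in>\<Theta>. pic_class T (ideal_prod I T)))
    \<and> kernel (Pic D) (sum_group \<Theta> Pic) (pic_map D \<Theta>) = Pic_rel D \<Theta>
    \<and> pic_map D \<Theta> ` carrier (Pic D) = carrier (sum_group \<Theta> Pic)"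
proof -
  note D = assms(1) and J = assms(2)
  have sD: "is_subring D" using dqf_subring[OF D] .
  have gD: "group (Pic D)" using group_Pic[OF D] .
  have oT: "\<And>T. T \<in> \<Theta> \<Longrightarrow> overring D T" using jaffard_facts(1)[OF J] by blast
  have dT: "\<And>T. T \<in> \<Theta> \<Longrightarrow> domain_with_qf T" using overring_dqf[OF D] oT by blast
  have gT: "\<And>T. T \<in> \<Theta> \<Longrightarrow> group (Pic T)" using group_Pic dT by blast
  have carrS: "carrier (sum_group \<Theta> Pic) =
      {x \<in> \<Pi>\<^sub>E T\<in>\<Theta>. carrier (Pic T). finite {T \<in> \<Theta>. x T \<noteq> \<one>\<^bsub>Pic T\<^esub>}}"
    by (rule carrier_sum_group) (rule gT)
  have extI: "\<And>I T. invertible_frac D I \<Longrightarrow> T \<in> \<Theta> \<Longrightarrow> invertible_frac T (ideal_prod I T)"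
    using oT ext_inv[OF _ _ sD] by (auto simp: overring_def)
  have val: "(\<lambda>T\<in>\<Theta>. pic_class T (ideal_prod I T)) \<in> carrier (sum_group \<Theta> Pic)"
    if I: "invertible_frac D I" for I
  proof -
    have "(\<lambda>T\<in>\<Theta>. pic_class T (ideal_prod I T)) \<in> (\<Pi>\<^sub>E T\<in>\<Theta>. carrier (Pic T))"
      using pic_class_in extI[OF I] by auto
    moreover have "finite {T \<in> \<Theta>. (\<lambda>T\<in>\<Theta>. pic_class T (ideal_prod I T)) T \<noteq> \<one>\<^bsub>Pic T\<^esub>}"
    proof -
      have "{T \<in> \<Theta>. (\<lambda>T\<in>\<Theta>. pic_class T (ideal_prod I T)) T \<noteq> \<one>\<^bsub>Pic T\<^esub>}
          = {T\<in>\<Theta>. pic_class T (ideal_prod I T) \<noteq> princ T}" by (auto simp: one_Pic)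
      thus ?thesis using fin_support[OF D J I] by simp
    qed
    ultimately show ?thesis using carrS by simp
  qed
  have pmc: "\<forall>I. invertible_frac D I \<longrightarrow>
          pic_map D \<Theta> (pic_class D I) = (\<lambda>T\<in>\<Theta>. pic_class T (ideal_prod I T))"
    using pic_map_class[OF D J] by blast
  have hom: "pic_map D \<Theta> \<in> hom (Pic D) (sum_group \<Theta> Pic)"
    unfolding hom_def
  proof (intro CollectI conjI ballI)
    show "pic_map D \<Theta> \<in> carrier (Pic D) \<rightarrow> carrier (sum_group \<Theta> Pic)"
    proof
      fix c assume "c \<in> carrier (Pic D)"
      then obtain I where I: "invertible_frac D I" "c = pic_class D I" by (auto simp: carrier_Pic)
      thus "pic_map D \<Theta> c \<in> carrier (sum_group \<Theta> Pic)" using val pmc by simp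
    qed
    fix c1 c2 assume c1: "c1 \<in> carrier (Pic D)" and c2: "c2 \<in> carrier (Pic D)"
    obtain I1 where I1: "invertible_frac D I1" "c1 = pic_class D I1" using c1 by (auto simp: carrier_Pic)
    obtain I2 where I2: "invertible_frac D I2" "c2 = pic_class D I2" using c2 by (auto simp: carrier_Pic)
    have I12: "invertible_frac D (ideal_prod I1 I2)" using inv_frac_mult[OF sD I1(1) I2(1)] .
    have "c1 \<otimes>\<^bsub>Pic D\<^esub> c2 = pic_class D (ideal_prod I1 I2)" using mult_Pic[OF D I1(1) I2(1)] I1 I2 by simp
    hence "pic_map D \<Theta> (c1 \<otimes>\<^bsub>Pic D\<^esub> c2) = (\<lambda>T\<in>\<Theta>. pic_class T (ideal_prod (ideal_prod I1 I2) T))"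
      using pmc I12 by simp
    also have "\<dots> = (\<lambda>T\<in>\<Theta>. pic_class T (ideal_prod I1 T) \<otimes>\<^bsub>Pic T\<^esub> pic_class T (ideal_prod I2 T))"
    proof (rule restrict_ext)
      fix T assume T: "T \<in> \<Theta>"
      have sT: "is_subring T" using oT[OF T] by (simp add: overring_def)
      show "pic_class T (ideal_prod (ideal_prod I1 I2) T) = pic_class T (ideal_prod I1 T) \<otimes>\<^bsub>Pic T\<^esub> pic_class T (ideal_prod I2 T)"
        using mult_Pic[OF dT[OF T] extI[OF I1(1) T] extI[OF I2(1) T]] ext_mult[OF sT] by simp
    qed
    also have "\<dots> = (\<lambda>T\<in>\<Theta>. pic_map D \<Theta> c1 T \<otimes>\<^bsub>Pic T\<^esub> pic_map D \<Theta> c2 T)"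
      by (rule restrict_ext) (simp add: pic_map_class[OF D J I1(1)] pic_map_class[OF D J I2(1)] I1(2) I2(2))
    also have "\<dots> = pic_map D \<Theta> c1 \<otimes>\<^bsub>sum_group \<Theta> Pic\<^esub> pic_map D \<Theta> c2"
      by simp
    finally show "pic_map D \<Theta> (c1 \<otimes>\<^bsub>Pic D\<^esub> c2) = pic_map D \<Theta> c1 \<otimes>\<^bsub>sum_group \<Theta> Pic\<^esub> pic_map D \<Theta> c2" .
  qed
  have GH: "group_hom (Pic D) (sum_group \<Theta> Pic) (pic_map D \<Theta>)"
    by (rule group_hom.intro[OF gD sum_group[of \<Theta> Pic, OF gT] group_hom_axioms.intro[OF hom]])
  have ker: "kernel (Pic D) (sum_group \<Theta> Pic) (pic_map D \<Theta>) = Pic_rel D \<Theta>"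
  proof
    show "kernel (Pic D) (sum_group \<Theta> Pic) (pic_map D \<Theta>) \<subseteq> Pic_rel D \<Theta>"
    proof
      fix c assume "c \<in> kernel (Pic D) (sum_group \<Theta> Pic) (pic_map D \<Theta>)"
      hence c: "c \<in> carrier (Pic D)" and eq: "pic_map D \<Theta> c = (\<lambda>T\<in>\<Theta>. princ T)"
        by (auto simp: kernel_def one_Pic)
      obtain I where I: "invertible_frac D I" "c = pic_class D I" using c by (auto simp: carrier_Pic)
      have "\<forall>T\<in>\<Theta>. principal T (ideal_prod I T)"
      proof
        fix T assume T: "T \<in> \<Theta>"
        have "pic_class T (ideal_prod I T) = princ T"
          using fun_cong[OF eq, of T] pmc I T by simp
        hence "ideal_prod I T \<in> princ T" using pic_class_eq_one[OF dT[OF T] extI[OF I(1) T]] by simp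
        thus "principal T (ideal_prod I T)" by (simp add: princ_def)
      qed
      moreover have "I \<in> c" using pic_class_self[OF D I(1)] I(2) by simp
      ultimately show "c \<in> Pic_rel D \<Theta>" using c unfolding Pic_rel_def by blast
    qed
    show "Pic_rel D \<Theta> \<subseteq> kernel (Pic D) (sum_group \<Theta> Pic) (pic_map D \<Theta>)"
    proof
      fix c assume "c \<in> Pic_rel D \<Theta>"
      then obtain I where c: "c \<in> carrier (Pic D)" and I: "I \<in> c" "\<forall>T\<in>\<Theta>. principal T (ideal_prod I T)"
        unfolding Pic_rel_def by blast
      obtain I0 where I0: "invertible_frac D I0" "c = pic_class D I0" using c by (auto simp: carrier_Pic)
      have Ii: "invertible_frac D I" and cI: "c = pic_class D I"
        using pic_class_elem_inv[OF D I0(1)] I(1) I0(2) by auto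
      have "pic_map D \<Theta> c = (\<lambda>T\<in>\<Theta>. pic_class T (ideal_prod I T))" using pmc Ii cI by simp
      also have "\<dots> = (\<lambda>T\<in>\<Theta>. princ T)"
      proof (rule restrict_ext)
        fix T assume T: "T \<in> \<Theta>"
        have "ideal_prod I T \<in> princ T" using I(2) T extI[OF Ii T] by (simp add: princ_def)
        thus "pic_class T (ideal_prod I T) = princ T" using pic_class_eq_one[OF dT[OF T] extI[OF Ii T]] by simp
      qed
      finally show "c \<in> kernel (Pic D) (sum_group \<Theta> Pic) (pic_map D \<Theta>)"
        using c by (simp add: kernel_def one_Pic)
    qed
  qed
  have sub: "subgroup (Pic_rel D \<Theta>) (Pic D)"
    using group_hom.subgroup_kernel[OF GH] ker by simp
  have S: "subgroup (pic_map D \<Theta> ` carrier (Pic D)) (sum_group \<Theta> Pic)"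
    using group_hom.img_is_subgroup[OF GH] .
  have delta: "(\<lambda>T\<in>\<Theta>. if T = T0 then c0 else princ T) \<in> pic_map D \<Theta> ` carrier (Pic D)"
    if T0: "T0 \<in> \<Theta>" and c0: "c0 \<in> carrier (Pic T0)" for T0 c0
  proof -
    obtain I where I: "invertible_frac D I"
      "(\<lambda>T\<in>\<Theta>. pic_class T (ideal_prod I T)) = (\<lambda>T\<in>\<Theta>. if T = T0 then c0 else princ T)"
      using delta_in_image[OF D J T0 c0] by blast
    have "pic_map D \<Theta> (pic_class D I) = (\<lambda>T\<in>\<Theta>. if T = T0 then c0 else princ T)"
      using pmc I by simp
    moreover have "pic_class D I \<in> carrier (Pic D)" using pic_class_in[OF I(1)] .
    ultimately show ?thesis by (metis image_eqI)
  qed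
  have ind: "\<forall>x\<in>carrier (sum_group \<Theta> Pic). {T\<in>\<Theta>. x T \<noteq> princ T} \<subseteq> F \<longrightarrow> x \<in> pic_map D \<Theta> ` carrier (Pic D)"
    if F: "finite F" "F \<subseteq> \<Theta>" for F
    using F
  proof (induction F rule: finite_subset_induct)
    case empty
    show ?case
    proof (intro ballI impI)
      fix x assume x: "x \<in> carrier (sum_group \<Theta> Pic)" and sx: "{T\<in>\<Theta>. x T \<noteq> princ T} \<subseteq> {}"
      have xP: "x \<in> (\<Pi>\<^sub>E T\<in>\<Theta>. carrier (Pic T))" using x carrS by simp
      have "x = \<one>\<^bsub>sum_group \<Theta> Pic\<^esub>"
      proof
        fix T show "x T = \<one>\<^bsub>sum_group \<Theta> Pic\<^esub> T"
        proof (cases "T \<in> \<Theta>")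
          case True
          hence "x T = princ T" using sx by blast
          thus ?thesis using True by (simp add: one_Pic)
        next
          case False
          thus ?thesis using PiE_arb[OF xP False] by simp
        qed
      qed
      thus "x \<in> pic_map D \<Theta> ` carrier (Pic D)" using subgroup.one_closed[OF S] by simp
    qed
  next
    case (insert T0 F)
    show ?case
    proof (intro ballI impI)
      fix x assume x: "x \<in> carrier (sum_group \<Theta> Pic)" and sx: "{T\<in>\<Theta>. x T \<noteq> princ T} \<subseteq> insert T0 F"
      have xP: "x \<in> (\<Pi>\<^sub>E T\<in>\<Theta>. carrier (Pic T))" using x carrS by simp
      define x' where "x' = (\<lambda>T\<in>\<Theta>. if T = T0 then princ T0 else x T)"
      define dl where "dl = (\<lambda>T\<in>\<Theta>. if T = T0 then x T0 else princ T)"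
      have T0: "T0 \<in> \<Theta>" using insert by simp
      have x0: "x T0 \<in> carrier (Pic T0)" using xP T0 by auto
      have sx': "{T\<in>\<Theta>. x' T \<noteq> princ T} \<subseteq> F"
      proof
        fix T assume T: "T \<in> {T\<in>\<Theta>. x' T \<noteq> princ T}"
        hence T1: "T \<in> \<Theta>" "x' T \<noteq> princ T" by auto
        have "T \<noteq> T0" using T1 by (auto simp: x'_def)
        hence "x T \<noteq> princ T" using T1 by (simp add: x'_def)
        hence "T \<in> insert T0 F" using sx T1(1) by blast
        thus "T \<in> F" using \<open>T \<noteq> T0\<close> by blast
      qed
      have "x' \<in> (\<Pi>\<^sub>E T\<in>\<Theta>. carrier (Pic T))"
        unfolding x'_def restrict_PiE_iff
      proof
        fix T assume T: "T \<in> \<Theta>"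
        show "(if T = T0 then princ T0 else x T) \<in> carrier (Pic T)"
        proof (cases "T = T0")
          case True thus ?thesis using monoid.one_closed[OF group.is_monoid[OF gT[OF T0]]] by (simp add: one_Pic)
        next
          case False thus ?thesis using xP T by auto
        qed
      qed
      moreover have "finite {T\<in>\<Theta>. x' T \<noteq> \<one>\<^bsub>Pic T\<^esub>}"
        unfolding one_Pic using sx' insert(1) by (rule finite_subset)
      ultimately have x'c: "x' \<in> carrier (sum_group \<Theta> Pic)" using carrS by simp
      have x'S: "x' \<in> pic_map D \<Theta> ` carrier (Pic D)" using insert.IH x'c sx' by blast
      have dlS: "dl \<in> pic_map D \<Theta> ` carrier (Pic D)" unfolding dl_def using delta[OF T0 x0] .
      have "x = x' \<otimes>\<^bsub>sum_group \<Theta> Pic\<^esub> dl"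
      proof
        fix T show "x T = (x' \<otimes>\<^bsub>sum_group \<Theta> Pic\<^esub> dl) T"
        proof (cases "T \<in> \<Theta>")
          case False
          have "x T = undefined" using PiE_arb[OF xP False] .
          moreover have "(x' \<otimes>\<^bsub>sum_group \<Theta> Pic\<^esub> dl) T = undefined" using False by simp
          ultimately show ?thesis by simp
        next
          case True
          have xT: "x T \<in> carrier (Pic T)" using xP True by auto
          have m: "(x' \<otimes>\<^bsub>sum_group \<Theta> Pic\<^esub> dl) T = x' T \<otimes>\<^bsub>Pic T\<^esub> dl T" using True by simp
          show ?thesis
          proof (cases "T = T0")
            case True
            hence "x' T = \<one>\<^bsub>Pic T0\<^esub>" "dl T = x T0" using T0 by (simp_all add: x'_def dl_def one_Pic)
            thus ?thesis using m monoid.l_one[OF group.is_monoid[OF gT[OF T0]] x0] True by simp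
          next
            case False
            hence "x' T = x T" "dl T = \<one>\<^bsub>Pic T\<^esub>" using \<open>T \<in> \<Theta>\<close> by (simp_all add: x'_def dl_def one_Pic)
            thus ?thesis using m monoid.r_one[OF group.is_monoid[OF gT[OF \<open>T \<in> \<Theta>\<close>]] xT] by simp
          qed
        qed
      qed
      thus "x \<in> pic_map D \<Theta> ` carrier (Pic D)" using subgroup.m_closed[OF S x'S dlS] by simp
    qed
  qed
  have img: "pic_map D \<Theta> ` carrier (Pic D) = carrier (sum_group \<Theta> Pic)"
  proof
    show "pic_map D \<Theta> ` carrier (Pic D) \<subseteq> carrier (sum_group \<Theta> Pic)"
      using hom by (auto simp: hom_def)
    show "carrier (sum_group \<Theta> Pic) \<subseteq> pic_map D \<Theta> ` carrier (Pic D)"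
    proof
      fix x assume x: "x \<in> carrier (sum_group \<Theta> Pic)"
      have "finite {T\<in>\<Theta>. x T \<noteq> princ T}" using x carrS by (simp add: one_Pic)
      thus "x \<in> pic_map D \<Theta> ` carrier (Pic D)" using ind[of "{T\<in>\<Theta>. x T \<noteq> princ T}"] x by blast
    qed
  qed
  have gT': "\<forall>T\<in>\<Theta>. group (Pic T)" using gT by blast
  show ?thesis by (intro conjI gD gT' sub hom pmc ker img)
qed


end
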